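(* Let $N\ge 2$, $\sigma>0$, $f_D>0$, and let $\mu_2,\dots,\mu_N\in[0,1)$. Consider the $N$-port fluid antenna system (FAS) channel model described in the context, with selected envelope $|h_{\mathrm{FAS}}|=\max\{|h_1|,\dots,|h_N|\}$. Then for every threshold $x_{\rm th}>0$ the level crossing rate of $|h_{\mathrm{FAS}}|$ is \begin{align*} L(x_{\rm th})&=\frac{\sqrt{2\pi}\,x_{\rm th}f_D}{\sigma} \Biggl\{ e^{-\frac{x_{\rm th}^2}{\sigma ^2}} \prod _{k=2}^N \left[ 1-Q_1 \left( \sqrt{\tfrac{2\mu_k^2}{\sigma ^{2}(1-\mu _{k}^{2})}}\, x_{\rm th} , \sqrt{\tfrac{2}{\sigma ^{2}(1-\mu _{k}^{2})}}\, x_{\rm th} \right) \right] \\ &\quad + \sum_{i=2}^N \frac {1}{1-\mu _i^{2}}e^{-\frac {x_{\rm th}^{2}}{\sigma ^{2}(1-\mu _i^{2})}} \int_0^{x_{\rm th}} \frac{2x_1}{\sigma^2}e^{-\frac{x_1^2}{\sigma ^{2}(1-\mu _i^{2})}} I_{0}\!\left ({\frac {2\mu _ix_{\rm th}x_1}{\sigma ^{2}(1-\mu _i^{2})}}\right) \\ &\qquad\qquad \times \prod _{\substack{k=2 \\ k \neq i}}^N \left[ 1-Q_1 \left( \sqrt{\tfrac{2\mu_k^2}{\sigma ^{2}(1-\mu _{k}^{2})}}\, x_1 , \sqrt{\tfrac{2}{\sigma ^{2}(1-\mu _{k}^{2})}}\, x_{\rm th} \right) \right]dx_1 \Biggr\},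 \end{align*} where $Q_1(a,b)$ is the first-order Marcum $Q$-function and $I_0$ is the zero-order modified Bessel function of the first kind.
   Context: FAS channel model: a receiver has $N$ ports; the channels are $h_1=\sigma x_0+j\sigma y_0$ and $h_k=\sigma(\sqrt{1-\mu_k^2}\,x_k+\mu_k x_0)+j\sigma(\sqrt{1-\mu_k^2}\,y_k+\mu_k y_0)$ for $k=2,\dots,N$, where $x_0,\dots,x_N,y_0,\dots,y_N$ are independent real Gaussian random variables with mean $0$ and variance $1/2$; thus $\mathbb{E}|h_k|^2=\sigma^2$. (In the paper's setting $\mu_k=J_0\!\left(\frac{2\pi(k-1)}{N-1}W\right)$ for a normalized aperture $W$, $J_0$ the Bessel function of the first kind of order zero.) With the convention $\mu_1:=0$, the joint density of the envelopes is $p_{|h_1|,\dots,|h_N|}(x_1,\dots,x_N)=\prod_{k=1}^N \frac{2x_k}{\sigma^2(1-\mu_k^2)}e^{-\frac{x_k^2+\mu_k^2x_1^2}{\sigma^2(1-\mu_k^2)}}I_0\!\left(\frac{2\mu_kx_1x_k}{\sigma^2(1-\mu_k^2)}\right)$ for $x_1,\dots,x_N\ge 0$. The FAS selects $|h_{\rm FAS}|=\max_k|h_k|$. Level crossing rate (LCR): the time derivative $|\dot h_i|$ of the envelope at each port $i$ (at an arbitrary instant) is modeled as a zero-mean Gaussian with density $p_{|\dot h_i|}$ and variance $\pi^2\sigma^2f_D^2$, where $f_D$ is the maximum Doppler frequency. The joint density of the derivative and value of the selected envelope is taken to be $p_{|\dot h|,|h|}(\dot x,x)=\sum_{i=1}^N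 p_{|\dot h_i|}(\dot x)\int_{[0,x]^{N-1}} p_{|h_1|,\dots,|h_N|}(x_1,\dots,x_{i-1},x,x_{i+1},\dots,x_N)\prod_{k\ne i}dx_k$, and the LCR at threshold $x_{\rm th}$ is $L(x_{\rm th})=\int_0^\infty \dot x\, p_{|\dot h|,|h|}(\dot x,x_{\rm th})\,d\dot x$. *)

theory Defs
  imports "HOL-Probability.Probability"
begin

definition bessel_I0 :: "real \<Rightarrow> real" where
  "bessel_I0 x = (\<Sum>n. (x / 2) ^ (2 * n) / (fact n)\<^sup>2)"

definition marcum_Q1 :: "real \<Rightarrow> real \<Rightarrow> real" where
  "marcum_Q1 a b = (LINT t:{b..}|lborel. t * exp (-(t\<^sup>2 + a\<^sup>2) / 2) * bessel_I0 (a * t))"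

definition fas_mu :: "(nat \<Rightarrow> real) \<Rightarrow> nat \<Rightarrow> real" where
  "fas_mu mu k = (if k = 1 then 0 else mu k)"

definition fas_env_pdf :: "nat \<Rightarrow> real \<Rightarrow> (nat \<Rightarrow> real) \<Rightarrow> (nat \<Rightarrow> real) \<Rightarrow> real" where
  "fas_env_pdf N \<sigma> mu x =
     (\<Prod>k\<in>{1..N}. let m = fas_mu mu k in
        2 * x k / (\<sigma>\<^sup>2 * (1 - m\<^sup>2))
        * exp (- ((x k)\<^sup>2 + m\<^sup>2 * (x 1)\<^sup>2) / (\<sigma>\<^sup>2 * (1 - m\<^sup>2)))
        * bessel_I0 (2 * m * x 1 * x k / (\<sigma>\<^sup>2 * (1 - m\<^sup>2))))"

text \<open>Joint density of derivative and value of the selected envelope max_k |h_k|.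
  The envelope derivative at each port is zero-mean Gaussian with variance pi^2 sigma^2 f_D^2.\<close>
definition fas_joint_pdf :: "nat \<Rightarrow> real \<Rightarrow> real \<Rightarrow> (nat \<Rightarrow> real) \<Rightarrow> real \<Rightarrow> real \<Rightarrow> real" where
  "fas_joint_pdf N \<sigma> fD mu xd x =
     (\<Sum>i\<in>{1..N}. normal_density 0 (pi * \<sigma> * fD) xd *
        (LINT y:(PiE ({1..N} - {i}) (\<lambda>_. {0..x}))|(PiM ({1..N} - {i}) (\<lambda>_. lborel)).
            fas_env_pdf N \<sigma> mu (y(i := x))))"

definition fas_lcr :: "nat \<Rightarrow> real \<Rightarrow> real \<Rightarrow> (nat \<Rightarrow> real) \<Rightarrow> real \<Rightarrow> real" where
  "fas_lcr N \<sigma> fD mu xth = (LINT xd:{0..}|lborel. xd * fas_joint_pdf N \<sigma> fD mu xd xth)"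

end

theory Submission
  imports Defs
begin


lemma I0_term_le: fixes x :: real shows "\<bar>(x/2)^(2*n) / (fact n)\<^sup>2\<bar> \<le> (x\<^sup>2/4)^n / fact n"
proof -
  have e: "(x/2)^(2*n) = (x\<^sup>2/4)^n" by (simp add: power_mult power_divide power2_eq_square)
  have f1: "(1::real) \<le> fact n" by simp
  have "(x\<^sup>2/4)^n / (fact n)\<^sup>2 \<le> (x\<^sup>2/4)^n / fact n"
    by (rule divide_left_mono) (auto simp: power2_eq_square f1)
  then show ?thesis using e by simp
qed

lemma I0_summable: fixes x :: real shows "summable (\<lambda>n. (x/2)^(2*n) / (fact n)\<^sup>2)"
proof (rule summable_comparison_test')
  show "summable (\<lambda>n. (x\<^sup>2/4)^n / fact n)"
    using summable_exp[of "x\<^sup>2/4"] by (simp add: field_simps)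
  show "\<And>n. n \<ge> 0 \<Longrightarrow> norm ((x/2)^(2*n) / (fact n)\<^sup>2) \<le> (x\<^sup>2/4)^n / fact n"
    using I0_term_le by simp
qed

lemma I0_nonneg: "0 \<le> bessel_I0 x"
  unfolding bessel_I0_def
  by (rule suminf_nonneg[OF I0_summable]) (simp add: power_mult)

lemma I0_zero: "bessel_I0 0 = 1"
proof -
  have "(\<lambda>n. (0/2::real)^(2*n) / (fact n)\<^sup>2) = (\<lambda>n. if n = 0 then 1 else 0)"
    by (auto simp: fun_eq_iff)
  then show ?thesis unfolding bessel_I0_def using sums_unique[OF sums_single[of 0 "\<lambda>_. 1::real"]] by simp
qed

lemma I0_measurable[measurable]: "bessel_I0 \<in> borel_measurable borel"
proof (rule borel_measurable_LIMSEQ_metric)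
  show "\<And>i. (\<lambda>x::real. \<Sum>n<i. (x/2)^(2*n) / (fact n)\<^sup>2) \<in> borel_measurable borel" by measurable
  show "\<And>x. x \<in> space borel \<Longrightarrow> (\<lambda>i. \<Sum>n<i. (x/2)^(2*n) / (fact n)\<^sup>2::real) \<longlonglongrightarrow> bessel_I0 x"
    unfolding bessel_I0_def using I0_summable summable_LIMSEQ by blast
qed

lemma I0_sums: fixes x :: real shows "(\<lambda>n. (x/2)^(2*n) / (fact n)\<^sup>2) sums bessel_I0 x"
  unfolding bessel_I0_def using I0_summable summable_sums by blast


definition rice :: "real \<Rightarrow> real \<Rightarrow> real" where
  "rice a t = t * exp (-(t\<^sup>2 + a\<^sup>2) / 2) * bessel_I0 (a * t)"

lemma rice_measurable[measurable]: "rice a \<in> borel_measurable borel"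
  unfolding rice_def by measurable

lemma sqrt2_pow: "(sqrt 2) ^ (2*k+1) = 2^k * sqrt 2"
  by (simp add: power_mult)

lemma sqrt2_pow2: "(sqrt 2) ^ (2*k) = (2::real)^k"
  by (simp add: power_mult)

lemma sqrt2_powS: "(sqrt 2) ^ Suc (2*k) = 2^k * sqrt 2"
  using sqrt2_pow[of k] by simp

lemma gmom: "has_bochner_integral lborel (\<lambda>x::real. indicator {0..} x * (x^(2*k+1) * exp(-x\<^sup>2/2))) (2^k * fact k)"
proof -
  have "has_bochner_integral lborel (\<lambda>x::real. indicator {0..} x *\<^sub>R (exp (-x\<^sup>2)*x^(2 * k + 1))) (fact k / 2)"
    by (rule gaussian_moment_odd_pos)
  then have "has_bochner_integral lborel (\<lambda>x. (\<lambda>x::real. indicator {0..} x *\<^sub>R (exp (-x\<^sup>2)*x^(2 * k + 1))) (0 + (1/sqrt 2) * x)) ((fact k / 2) /\<^sub>R \<bar>1/sqrt 2\<bar>)"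
    by (subst lborel_has_bochner_integral_real_affine_iff[symmetric]) auto
  then have h: "has_bochner_integral lborel (\<lambda>x. (2^k * sqrt 2) * (\<lambda>x::real. indicator {0..} x *\<^sub>R (exp (-x\<^sup>2)*x^(2 * k + 1))) (0 + (1/sqrt 2) * x)) ((2^k * sqrt 2) * ((fact k / 2) /\<^sub>R \<bar>1/sqrt 2\<bar>))"
    by (rule has_bochner_integral_mult_right)
  have ef: "\<And>x. (2^k * sqrt 2) * (\<lambda>x::real. indicator {0..} x *\<^sub>R (exp (-x\<^sup>2)*x^(2 * k + 1))) (0 + (1/sqrt 2) * x)
     = indicator {0..} x * (x^(2*k+1) * exp(-x\<^sup>2/2))"
  proof -
    fix x :: real
    have i: "indicator {0..} ((1/sqrt 2) * x) = (indicator {0..} x :: real)"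
      by (simp add: indicator_def zero_le_mult_iff zero_le_divide_iff)
    have p: "((1/sqrt 2) * x)^(2*k+1) = x^(2*k+1) / (2^k * sqrt 2)"
      by (simp only: power_mult_distrib power_divide sqrt2_pow power_one) simp
    have q: "((1/sqrt 2) * x)\<^sup>2 = x\<^sup>2/2"
      by (simp add: power_mult_distrib power_divide)
    show "?thesis x" by (simp only: add_0_left real_scaleR_def i p q) (simp add: field_simps)
  qed
  have ev: "(2^k * sqrt 2) * ((fact k / 2) /\<^sub>R \<bar>1/sqrt 2\<bar>) = (2^k * fact k :: real)"
    by (simp add: field_simps)
  show ?thesis using h unfolding ef ev .
qed

lemma gmom_nn: "(\<integral>\<^sup>+x. ennreal (indicator {0..} x * (x^(2*k+1) * exp(-x\<^sup>2/2))) \<partial>lborel) = ennreal (2^k * fact k)"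
proof -
  have "(\<integral>\<^sup>+x. ennreal (indicator {0..} x * (x^(2*k+1) * exp(-x\<^sup>2/2))) \<partial>lborel)
     = ennreal (integral\<^sup>L lborel (\<lambda>x::real. indicator {0..} x * (x^(2*k+1) * exp(-x\<^sup>2/2))))"
    by (rule nn_integral_eq_integral) (use gmom[of k] in \<open>auto simp: integrable.intros indicator_def\<close>)
  then show ?thesis using gmom[of k] by (simp add: has_bochner_integral_integral_eq)
qed

definition rc :: "real \<Rightarrow> nat \<Rightarrow> real" where
  "rc a n = exp (-a\<^sup>2/2) * (a/2)^(2*n) / (fact n)\<^sup>2"

lemma rc_nonneg: "0 \<le> rc a n"
  unfolding rc_def by (simp add: power_mult)

lemma rice_sums: "(\<lambda>n. rc a n * (t^(2*n+1) * exp(-t\<^sup>2/2))) sums rice a t"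
proof -
  have "(\<lambda>n. (t * exp (-(t\<^sup>2 + a\<^sup>2) / 2)) * ((a*t/2)^(2*n) / (fact n)\<^sup>2)) sums ((t * exp (-(t\<^sup>2 + a\<^sup>2) / 2)) * bessel_I0 (a*t))"
    by (rule sums_mult[OF I0_sums])
  moreover have "\<And>n. (t * exp (-(t\<^sup>2 + a\<^sup>2) / 2)) * ((a*t/2)^(2*n) / (fact n)\<^sup>2) = rc a n * (t^(2*n+1) * exp(-t\<^sup>2/2))"
  proof -
    fix n
    have "exp (-(t\<^sup>2 + a\<^sup>2) / 2) = exp (-a\<^sup>2/2) * exp(-t\<^sup>2/2)"
      by (simp add: exp_add[symmetric] field_simps)
    then show "?thesis n" unfolding rc_def
      by (simp add: power_mult_distrib field_simps)
  qed
  ultimately show ?thesis unfolding rice_def by simp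
qed

lemma rice_total: "(\<integral>\<^sup>+t. ennreal (indicator {0..} t * rice a t) \<partial>lborel) = 1"
proof -
  have "\<And>t. ennreal (indicator {0..} t * rice a t) = (\<Sum>n. ennreal (rc a n * (indicator {0..} t * (t^(2*n+1) * exp(-t\<^sup>2/2)))))"
  proof -
    fix t :: real
    have s: "(\<lambda>n. rc a n * (indicator {0..} t * (t^(2*n+1) * exp(-t\<^sup>2/2)))) sums (indicator {0..} t * rice a t)"
      using sums_mult[OF rice_sums[of a t], of "indicator {0..} t"]
      by (simp add: ac_simps)
    show "?thesis t"
      by (subst suminf_ennreal2) (use s rc_nonneg in \<open>auto simp: sums_iff indicator_def\<close>)
  qed
  then have "(\<integral>\<^sup>+t. ennreal (indicator {0..} t * rice a t) \<partial>lborel)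
     = (\<integral>\<^sup>+t. (\<Sum>n. ennreal (rc a n * (indicator {0..} t * (t^(2*n+1) * exp(-t\<^sup>2/2))))) \<partial>lborel)"
    by simp
  also have "\<dots> = (\<Sum>n. (\<integral>\<^sup>+t. ennreal (rc a n * (indicator {0..} t * (t^(2*n+1) * exp(-t\<^sup>2/2)))) \<partial>lborel))"
    by (rule nn_integral_suminf) measurable
  also have "\<dots> = (\<Sum>n. ennreal (rc a n * (2^n * fact n)))"
  proof (rule suminf_cong)
    fix n
    have "(\<integral>\<^sup>+t. ennreal (rc a n * (indicator {0..} t * (t^(2*n+1) * exp(-t\<^sup>2/2)))) \<partial>lborel)
      = (\<integral>\<^sup>+t. ennreal (rc a n) * ennreal (indicator {0..} t * (t^(2*n+1) * exp(-t\<^sup>2/2))) \<partial>lborel)"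
      by (rule nn_integral_cong, rule ennreal_mult) (auto simp: rc_nonneg indicator_def)
    also have "\<dots> = ennreal (rc a n) * ennreal (2^n * fact n)"
      using nn_integral_cmult[of "\<lambda>t. ennreal (indicator {0..} t * (t^(2*n+1) * exp(-t\<^sup>2/2)))" lborel "ennreal (rc a n)"] gmom_nn[of n]
      by simp
    finally show "(\<integral>\<^sup>+t. ennreal (rc a n * (indicator {0..} t * (t^(2*n+1) * exp(-t\<^sup>2/2)))) \<partial>lborel) = ennreal (rc a n * (2^n * fact n))"
      by (simp add: ennreal_mult rc_nonneg)
  qed
  also have "\<dots> = ennreal (exp (-a\<^sup>2/2) * exp (a\<^sup>2/2))"
  proof -
    have e: "\<And>n. rc a n * (2^n * fact n) = exp (-a\<^sup>2/2) * ((a\<^sup>2/2)^n /\<^sub>R fact n)"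
    proof -
      fix n
      have "(a/2)^(2*n) * 2^n = ((a/2)\<^sup>2 * 2)^n"
        by (simp add: power_mult power_mult_distrib)
      also have "(a/2)\<^sup>2 * 2 = a\<^sup>2/2" by (simp add: power2_eq_square)
      finally have "(a/2)^(2*n) * 2^n = (a\<^sup>2/2)^n" .
      then show "?thesis n" unfolding rc_def
        by (simp add: power2_eq_square field_simps)
    qed
    have "(\<lambda>n. rc a n * (2^n * fact n)) sums (exp (-a\<^sup>2/2) * exp (a\<^sup>2/2))"
      unfolding e by (rule sums_mult[OF exp_converges])
    then show ?thesis
      by (subst suminf_ennreal2) (auto simp: sums_iff rc_nonneg)
  qed
  also have "\<dots> = 1" by (simp add: exp_add[symmetric])
  finally show ?thesis .
qed


lemma rice_nonneg: "0 \<le> t \<Longrightarrow> 0 \<le> rice a t"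
  unfolding rice_def by (simp add: I0_nonneg)

lemma marcum_rice: "marcum_Q1 a b = (LINT t:{b..}|lborel. rice a t)"
  unfolding marcum_Q1_def rice_def by simp

lemma Q1_split:
  assumes b: "0 \<le> b"
  shows "(\<integral>\<^sup>+t. ennreal (indicator {0..b} t * rice a t) \<partial>lborel) = ennreal (1 - marcum_Q1 a b) \<and> marcum_Q1 a b \<le> 1"
proof -
  define P where "P = (\<integral>\<^sup>+t. ennreal (indicator {0..b} t * rice a t) \<partial>lborel)"
  define Q where "Q = (\<integral>\<^sup>+t. ennreal (indicator {b..} t * rice a t) \<partial>lborel)"
  have mq: "marcum_Q1 a b = enn2real Q"
    unfolding marcum_rice set_lebesgue_integral_def Q_def real_scaleR_def
    by (rule integral_eq_nn_integral) (use b in \<open>auto simp: indicator_def intro!: rice_nonneg\<close>)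
  have "(\<integral>\<^sup>+t. ennreal (indicator {b<..} t * rice a t) \<partial>lborel) = Q"
    unfolding Q_def
    by (rule nn_integral_cong_AE, rule eventually_mono[OF AE_lborel_singleton[of b]])
       (auto simp: indicator_def)
  moreover have "P + (\<integral>\<^sup>+t. ennreal (indicator {b<..} t * rice a t) \<partial>lborel) = 1"
  proof -
    have "P + (\<integral>\<^sup>+t. ennreal (indicator {b<..} t * rice a t) \<partial>lborel)
        = (\<integral>\<^sup>+t. ennreal (indicator {0..b} t * rice a t) + ennreal (indicator {b<..} t * rice a t) \<partial>lborel)"
      unfolding P_def by (rule nn_integral_add[symmetric]) auto
    also have "\<dots> = (\<integral>\<^sup>+t. ennreal (indicator {0..} t * rice a t) \<partial>lborel)"
      by (rule nn_integral_cong) (use b in \<open>auto simp: indicator_def intro!: rice_nonneg\<close>)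
    finally show ?thesis using rice_total by simp
  qed
  ultimately have PQ: "P + Q = 1" by simp
  then have "Q \<noteq> \<top>" "P \<noteq> \<top>" by (auto simp: top_add add_top)
  then obtain p q where p: "P = ennreal p" "0 \<le> p" and q: "Q = ennreal q" "0 \<le> q"
    by (metis ennreal_cases ennreal_enn2real enn2real_nonneg)
  with PQ have "p + q = 1" by (simp del: ennreal_plus add: ennreal_plus[symmetric])
  then show ?thesis using p q mq P_def by simp
qed


definition fac :: "real \<Rightarrow> real \<Rightarrow> real \<Rightarrow> real \<Rightarrow> real" where
  "fac \<sigma> m u v = 2 * v / (\<sigma>\<^sup>2 * (1 - m\<^sup>2))
        * exp (- (v\<^sup>2 + m\<^sup>2 * u\<^sup>2) / (\<sigma>\<^sup>2 * (1 - m\<^sup>2)))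
        * bessel_I0 (2 * m * u * v / (\<sigma>\<^sup>2 * (1 - m\<^sup>2)))"

lemma fac_nonneg: "0 < \<sigma> \<Longrightarrow> m\<^sup>2 < 1 \<Longrightarrow> 0 \<le> v \<Longrightarrow> 0 \<le> fac \<sigma> m u v"
  unfolding fac_def by (intro mult_nonneg_nonneg divide_nonneg_pos I0_nonneg) auto

lemma fac_scale:
  assumes \<sigma>: "0 < \<sigma>" and m: "0 \<le> m" "m < 1" and X: "0 \<le> X"
  shows "(\<integral>\<^sup>+v. ennreal (indicator {0..X} v * fac \<sigma> m u v) \<partial>lborel)
     = ennreal (1 - marcum_Q1 (sqrt (2 * m\<^sup>2 / (\<sigma>\<^sup>2 * (1 - m\<^sup>2))) * u) (sqrt (2 / (\<sigma>\<^sup>2 * (1 - m\<^sup>2))) * X))"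
proof -
  define c where "c = \<sigma>\<^sup>2 * (1 - m\<^sup>2)"
  have c: "0 < c" unfolding c_def using \<sigma> m by (simp add: power_less_one_iff abs_square_less_1)
  define r where "r = sqrt (2 / c)"
  have r: "0 < r" unfolding r_def using c by simp
  have r2: "r\<^sup>2 = 2 / c" unfolding r_def using c by simp
  have cr: "c = 2 / r\<^sup>2" using r2 c r by (simp add: field_simps)
  have a: "sqrt (2 * m\<^sup>2 / (\<sigma>\<^sup>2 * (1 - m\<^sup>2))) = m * r"
    unfolding r_def c_def[symmetric] using m by (simp add: real_sqrt_mult real_sqrt_divide)
  have pw: "\<And>t. (1/r) * (indicator {0..X} ((1/r) * t) * fac \<sigma> m u ((1/r) * t)) = indicator {0..r*X} t * rice (m*r*u) t"
  proof -
    fix t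
    have i: "indicator {0..X} ((1/r) * t) = (indicator {0..r*X} t :: real)"
      using r by (auto simp: indicator_def field_simps zero_le_mult_iff)
    have f: "(1/r) * fac \<sigma> m u ((1/r) * t) = rice (m*r*u) t"
      unfolding fac_def c_def[symmetric] rice_def cr using r
      by (simp add: field_simps power2_eq_square)
    show "?thesis t" using i f by (metis mult.left_commute)
  qed
  have "(\<integral>\<^sup>+v. ennreal (indicator {0..X} v * fac \<sigma> m u v) \<partial>lborel)
      = \<bar>1/r\<bar> * (\<integral>\<^sup>+t. ennreal (indicator {0..X} (0 + (1/r) * t) * fac \<sigma> m u (0 + (1/r) * t)) \<partial>lborel)"
    by (rule nn_integral_real_affine) (use r in \<open>auto simp: fac_def\<close>)
  also have "\<dots> = (\<integral>\<^sup>+t. ennreal (1/r) * ennreal (indicator {0..X} ((1/r) * t) * fac \<sigma> m u ((1/r) * t)) \<partial>lborel)"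
    using r by (subst nn_integral_cmult) (auto simp: fac_def)
  also have "\<dots> = (\<integral>\<^sup>+t. ennreal (indicator {0..r*X} t * rice (m*r*u) t) \<partial>lborel)"
  proof (rule nn_integral_cong)
    fix t
    have "0 \<le> indicator {0..X} ((1/r) * t) * fac \<sigma> m u ((1/r) * t)"
      using \<sigma> m r by (auto simp: indicator_def intro!: fac_nonneg abs_square_less_1[THEN iffD2])
    then show "ennreal (1/r) * ennreal (indicator {0..X} ((1/r) * t) * fac \<sigma> m u ((1/r) * t)) = ennreal (indicator {0..r*X} t * rice (m*r*u) t)"
      using r pw[of t] by (simp add: ennreal_mult[symmetric])
  qed
  also have "\<dots> = ennreal (1 - marcum_Q1 (m*r*u) (r*X))"
    by (rule Q1_split[THEN conjunct1]) (use r X in simp)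
  finally show ?thesis unfolding a r_def c_def by (simp add: ac_simps)
qed

lemma Q1_le1: "0 \<le> b \<Longrightarrow> marcum_Q1 a b \<le> 1"
  using Q1_split by blast


lemma half_normal_mean:
  assumes s: "0 < s"
  shows "(LINT x:{0..}|lborel. x * normal_density 0 s x) = s / sqrt (2 * pi)"
proof -
  define c where "c = 1 / (sqrt 2 * s)"
  have c: "0 < c" unfolding c_def using s by simp
  have "has_bochner_integral lborel (\<lambda>x::real. indicator {0..} x *\<^sub>R (exp (- x\<^sup>2) * x)) (1 / 2)"
    by (rule gaussian_moment_1)
  then have "has_bochner_integral lborel (\<lambda>x. (\<lambda>x::real. indicator {0..} x *\<^sub>R (exp (- x\<^sup>2) * x)) (0 + c * x)) ((1/2) /\<^sub>R \<bar>c\<bar>)"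
    by (subst lborel_has_bochner_integral_real_affine_iff[symmetric]) (use c in auto)
  then have h: "has_bochner_integral lborel (\<lambda>x. (sqrt 2 * s / sqrt (2 * pi * s\<^sup>2)) * (\<lambda>x::real. indicator {0..} x *\<^sub>R (exp (- x\<^sup>2) * x)) (0 + c * x)) ((sqrt 2 * s / sqrt (2 * pi * s\<^sup>2)) * ((1/2) /\<^sub>R \<bar>c\<bar>))"
    by (rule has_bochner_integral_mult_right)
  have ef: "\<And>x. (sqrt 2 * s / sqrt (2 * pi * s\<^sup>2)) * (\<lambda>x::real. indicator {0..} x *\<^sub>R (exp (- x\<^sup>2) * x)) (0 + c * x)
      = indicator {0..} x *\<^sub>R (x * normal_density 0 s x)"
  proof -
    fix x :: real
    have i: "indicator {0..} (c * x) = (indicator {0..} x :: real)"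
      using c by (simp add: indicator_def zero_le_mult_iff)
    have q: "(c * x)\<^sup>2 = x\<^sup>2 / (2 * s\<^sup>2)"
      unfolding c_def by (simp add: power_mult_distrib power_divide)
    have "(sqrt 2 * s) * c = 1" unfolding c_def using s by simp
    then show "?thesis x" unfolding normal_density_def
      by (simp only: add_0_left real_scaleR_def i q) (simp add: field_simps)
  qed
  have ev: "(sqrt 2 * s / sqrt (2 * pi * s\<^sup>2)) * ((1/2) /\<^sub>R \<bar>c\<bar>) = s / sqrt (2 * pi)"
    unfolding c_def using s by (simp add: real_sqrt_mult field_simps)
  have "has_bochner_integral lborel (\<lambda>x. indicator {0..} x *\<^sub>R (x * normal_density 0 s x)) (s / sqrt (2 * pi))"
    using h unfolding ef ev .
  then show ?thesis unfolding set_lebesgue_integral_def by (simp add: has_bochner_integral_integral_eq)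
qed


lemma pdf_fac: "fas_env_pdf N \<sigma> mu x = (\<Prod>k\<in>{1..N}. fac \<sigma> (fas_mu mu k) (x 1) (x k))"
  by (simp add: fas_env_pdf_def fac_def Let_def)

lemma fac_meas[measurable (raw)]:
  assumes [measurable]: "f \<in> borel_measurable M" "g \<in> borel_measurable M"
  shows "(\<lambda>y. fac \<sigma> m (f y) (g y)) \<in> borel_measurable M"
  unfolding fac_def by measurable

lemma indicator_PiE_prod:
  assumes "finite I" "y \<in> extensional I"
  shows "indicator (PiE I B) y = (\<Prod>k\<in>I. indicator (B k) (y k) :: real)"
proof (cases "y \<in> PiE I B")
  case True
  then show ?thesis by (auto simp: indicator_def PiE_iff intro!: prod.neutral)
next
  case False
  then obtain k where "k \<in> I" "y k \<notin> B k" using assms(2) by (auto simp: PiE_iff)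
  then show ?thesis using False assms(1) by (auto simp: indicator_def intro!: prod_zero)
qed

lemma upd_meas:
  assumes "k \<in> insert i J"
  shows "(\<lambda>y. (y(i:=X)) k) \<in> borel_measurable (PiM J (\<lambda>_. lborel))"
proof (cases "k = i")
  case True then show ?thesis by simp
next
  case False
  then have "k \<in> J" using assms by auto
  then have "(\<lambda>y. y k) \<in> borel_measurable (PiM J (\<lambda>_. lborel))"
    using measurable_component_singleton[of k J "\<lambda>_. lborel"] by (simp add: measurable_lborel1)
  then show ?thesis using False by simp
qed

lemma pdf_upd_meas:
  assumes "{1..N} \<subseteq> insert i J"
  shows "(\<lambda>y. fas_env_pdf N \<sigma> mu (y(i:=X))) \<in> borel_measurable (PiM J (\<lambda>_. lborel))"
  unfolding pdf_fac
proof (rule borel_measurable_prod, rule fac_meas)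
  fix k assume k: "k \<in> {1..N}"
  then have "1 \<in> {1..N}" by auto
  then show "(\<lambda>y. (y(i:=X)) 1) \<in> borel_measurable (PiM J (\<lambda>_. lborel))"
    using assms by (intro upd_meas) auto
  show "(\<lambda>y. (y(i:=X)) k) \<in> borel_measurable (PiM J (\<lambda>_. lborel))"
    using assms k by (intro upd_meas) auto
qed

lemma box_meas:
  assumes "finite J"
  shows "indicator (PiE J (\<lambda>_. {0..X::real})) \<in> borel_measurable (PiM J (\<lambda>_. lborel))"
  by (rule borel_measurable_indicator) (use assms in auto)

lemma J_nn:
  assumes "finite J" "{1..N} \<subseteq> insert i J" "0 < \<sigma>" "\<And>k. k \<in> {2..N} \<Longrightarrow> 0 \<le> mu k \<and> mu k < 1" "0 \<le> X"
  shows "(LINT y:(PiE J (\<lambda>_. {0..X}))|(PiM J (\<lambda>_. lborel)). fas_env_pdf N \<sigma> mu (y(i := X)))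
     = enn2real (\<integral>\<^sup>+y. ennreal (indicator (PiE J (\<lambda>_. {0..X})) y * fas_env_pdf N \<sigma> mu (y(i := X))) \<partial>PiM J (\<lambda>_. lborel))"
  unfolding set_lebesgue_integral_def real_scaleR_def
proof (rule integral_eq_nn_integral)
  show "(\<lambda>y. indicator (PiE J (\<lambda>_. {0..X})) y * fas_env_pdf N \<sigma> mu (y(i := X))) \<in> borel_measurable (PiM J (\<lambda>_. lborel))"
    using box_meas[OF assms(1)] pdf_upd_meas[OF assms(2)] by measurable
  show "AE y in PiM J (\<lambda>_. lborel::real measure). 0 \<le> indicator (PiE J (\<lambda>_. {0..X})) y * fas_env_pdf N \<sigma> mu (y(i := X))"
  proof (rule AE_I2)
    fix y assume "y \<in> space (PiM J (\<lambda>_. lborel::real measure))"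
    show "0 \<le> indicator (PiE J (\<lambda>_. {0..X})) y * fas_env_pdf N \<sigma> mu (y(i := X))"
    proof (cases "y \<in> PiE J (\<lambda>_. {0..X})")
      case False then show ?thesis by simp
    next
      case True
      have "0 \<le> fac \<sigma> (fas_mu mu k) ((y(i:=X)) 1) ((y(i:=X)) k)" if "k \<in> {1..N}" for k
      proof (rule fac_nonneg)
        show "0 < \<sigma>" by fact
        show "(fas_mu mu k)\<^sup>2 < 1" using assms(4)[of k] that
          by (auto simp: fas_mu_def abs_square_less_1)
        show "0 \<le> (y(i:=X)) k" using True that assms(2,5) by (auto simp: PiE_iff)
      qed
      then have "0 \<le> fas_env_pdf N \<sigma> mu (y(i:=X))" unfolding pdf_fac by (rule prod_nonneg)
      then show ?thesis using True by simp
    qed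
  qed
qed


lemma ennreal_cprod:
  assumes "0 \<le> c" "\<And>k. k \<in> I \<Longrightarrow> 0 \<le> f k"
  shows "ennreal (c * prod f I) = ennreal c * (\<Prod>k\<in>I. ennreal (f k))"
  using assms by (simp add: ennreal_mult prod_ennreal prod_nonneg)

lemma J1:
  assumes N: "2 \<le> N" and \<sigma>: "0 < \<sigma>" and mu: "\<And>k. k \<in> {2..N} \<Longrightarrow> 0 \<le> mu k \<and> mu k < 1" and X: "0 \<le> X"
  shows "(LINT y:(PiE {2..N} (\<lambda>_. {0..X}))|(PiM {2..N} (\<lambda>_. lborel)). fas_env_pdf N \<sigma> mu (y(1 := X)))
    = 2 * X / \<sigma>\<^sup>2 * exp (- X\<^sup>2 / \<sigma>\<^sup>2) *
        (\<Prod>k\<in>{2..N}. 1 - marcum_Q1 (sqrt (2 * (mu k)\<^sup>2 / (\<sigma>\<^sup>2 * (1 - (mu k)\<^sup>2))) * X)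
                                      (sqrt (2 / (\<sigma>\<^sup>2 * (1 - (mu k)\<^sup>2))) * X))"
proof -
  interpret product_sigma_finite "\<lambda>_::nat. lborel::real measure" by standard
  define I where "I = {2..N}"
  define K where "K = fac \<sigma> 0 X X"
  define R where "R k = 1 - marcum_Q1 (sqrt (2 * (mu k)\<^sup>2 / (\<sigma>\<^sup>2 * (1 - (mu k)\<^sup>2))) * X)
                                      (sqrt (2 / (\<sigma>\<^sup>2 * (1 - (mu k)\<^sup>2))) * X)" for k
  have K: "K = 2 * X / \<sigma>\<^sup>2 * exp (- X\<^sup>2 / \<sigma>\<^sup>2)" unfolding K_def fac_def by (simp add: I0_zero)
  have K0: "0 \<le> K" unfolding K using X by simp
  have R0: "0 \<le> R k" if "k \<in> I" for k
  proof -
    have "(mu k)\<^sup>2 \<le> 1" using mu[of k] that by (simp add: I_def power_le_one)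
    then show ?thesis unfolding R_def using X by (simp, intro Q1_le1 mult_nonneg_nonneg) auto
  qed
  have fac0: "0 \<le> indicator {0..X} v * fac \<sigma> (mu k) X v" if "k \<in> I" for k v
    using mu[of k] that \<sigma> by (auto simp: I_def indicator_def abs_square_less_1 intro!: fac_nonneg)
  have ins: "{1..N} = insert 1 I" unfolding I_def using N by auto
  have "(LINT y:(PiE I (\<lambda>_. {0..X}))|(PiM I (\<lambda>_. lborel)). fas_env_pdf N \<sigma> mu (y(1 := X)))
     = enn2real (\<integral>\<^sup>+y. ennreal (indicator (PiE I (\<lambda>_. {0..X})) y * fas_env_pdf N \<sigma> mu (y(1 := X))) \<partial>PiM I (\<lambda>_. lborel))"
    by (rule J_nn) (use \<sigma> mu X in \<open>auto simp: I_def\<close>)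
  also have "(\<integral>\<^sup>+y. ennreal (indicator (PiE I (\<lambda>_. {0..X})) y * fas_env_pdf N \<sigma> mu (y(1 := X))) \<partial>PiM I (\<lambda>_. lborel))
     = (\<integral>\<^sup>+y. ennreal K * (\<Prod>k\<in>I. ennreal (indicator {0..X} (y k) * fac \<sigma> (mu k) X (y k))) \<partial>PiM I (\<lambda>_. lborel))"
  proof (rule nn_integral_cong)
    fix y assume y: "y \<in> space (PiM I (\<lambda>_. lborel::real measure))"
    then have ye: "y \<in> extensional I" by (simp add: space_PiM PiE_def)
    have "fas_env_pdf N \<sigma> mu (y(1 := X)) = K * (\<Prod>k\<in>I. fac \<sigma> (mu k) X (y k))"
      unfolding pdf_fac ins K_def
      by (subst prod.insert) (auto simp: I_def fas_mu_def intro!: prod.cong)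
    moreover have "indicator (PiE I (\<lambda>_. {0..X})) y = (\<Prod>k\<in>I. indicator {0..X} (y k) :: real)"
      by (rule indicator_PiE_prod) (use ye in \<open>auto simp: I_def\<close>)
    ultimately have "indicator (PiE I (\<lambda>_. {0..X})) y * fas_env_pdf N \<sigma> mu (y(1 := X))
        = K * (\<Prod>k\<in>I. indicator {0..X} (y k) * fac \<sigma> (mu k) X (y k))"
      by (simp add: prod.distrib ac_simps)
    then show "ennreal (indicator (PiE I (\<lambda>_. {0..X})) y * fas_env_pdf N \<sigma> mu (y(1 := X)))
       = ennreal K * (\<Prod>k\<in>I. ennreal (indicator {0..X} (y k) * fac \<sigma> (mu k) X (y k)))"
      using ennreal_cprod[OF K0, of I "\<lambda>k. indicator {0..X} (y k) * fac \<sigma> (mu k) X (y k)"] fac0 by simp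
  qed
  also have "\<dots> = ennreal K * (\<integral>\<^sup>+y. (\<Prod>k\<in>I. ennreal (indicator {0..X} (y k) * fac \<sigma> (mu k) X (y k))) \<partial>PiM I (\<lambda>_. lborel))"
    by (rule nn_integral_cmult) (auto simp: I_def intro!: borel_measurable_prod_ennreal)
  also have "(\<integral>\<^sup>+y. (\<Prod>k\<in>I. ennreal (indicator {0..X} (y k) * fac \<sigma> (mu k) X (y k))) \<partial>PiM I (\<lambda>_. lborel))
      = (\<Prod>k\<in>I. \<integral>\<^sup>+v. ennreal (indicator {0..X} v * fac \<sigma> (mu k) X v) \<partial>lborel)"
    by (rule product_nn_integral_prod[where f="\<lambda>k v. ennreal (indicator {0..X} v * fac \<sigma> (mu k) X v)"]) (auto simp: I_def)
  also have "\<dots> = (\<Prod>k\<in>I. ennreal (R k))"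
    by (rule prod.cong) (use \<sigma> mu X in \<open>auto simp: I_def R_def intro!: fac_scale\<close>)
  also have "ennreal K * (\<Prod>k\<in>I. ennreal (R k)) = ennreal (K * prod R I)"
    by (rule ennreal_cprod[symmetric]) (use K0 R0 in auto)
  also have "enn2real (ennreal (K * prod R I)) = K * prod R I"
    using K0 R0 by (simp add: prod_nonneg)
  finally show ?thesis by (simp only: I_def R_def[abs_def] K)
qed


lemma Rp_meas[measurable]:
  "(\<lambda>u. enn2real (\<integral>\<^sup>+v. ennreal (indicator {0..X} v * fac \<sigma> m u v) \<partial>lborel)) \<in> borel_measurable borel"
  by measurable

lemma G_alg:
  assumes \<sigma>: "0 < \<sigma>" and m: "m\<^sup>2 < 1"
  shows "fac \<sigma> 0 x1 x1 * fac \<sigma> m x1 X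
    = (2 * X / (\<sigma>\<^sup>2 * (1 - m\<^sup>2)) * exp (- X\<^sup>2 / (\<sigma>\<^sup>2 * (1 - m\<^sup>2)))) *
      (2 * x1 / \<sigma>\<^sup>2 * exp (- x1\<^sup>2 / (\<sigma>\<^sup>2 * (1 - m\<^sup>2))) * bessel_I0 (2 * m * X * x1 / (\<sigma>\<^sup>2 * (1 - m\<^sup>2))))"
proof -
  define c where "c = \<sigma>\<^sup>2 * (1 - m\<^sup>2)"
  have c: "c \<noteq> 0" "1 - m\<^sup>2 \<noteq> 0" unfolding c_def using \<sigma> m by auto
  have e: "exp (- (x1\<^sup>2 + 0\<^sup>2 * x1\<^sup>2) / (\<sigma>\<^sup>2 * (1 - 0\<^sup>2))) * exp (- (X\<^sup>2 + m\<^sup>2 * x1\<^sup>2) / c)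
      = exp (- X\<^sup>2 / c) * exp (- x1\<^sup>2 / c)"
  proof -
    have "- (x1\<^sup>2 + 0\<^sup>2 * x1\<^sup>2) / (\<sigma>\<^sup>2 * (1 - 0\<^sup>2)) + - (X\<^sup>2 + m\<^sup>2 * x1\<^sup>2) / c = - X\<^sup>2 / c + - x1\<^sup>2 / c"
    proof -
      have h1: "x1\<^sup>2 / \<sigma>\<^sup>2 = x1\<^sup>2 * (1 - m\<^sup>2) / c" unfolding c_def using c \<sigma> by simp
      have "x1\<^sup>2 * (1 - m\<^sup>2) / c + m\<^sup>2 * x1\<^sup>2 / c = x1\<^sup>2 / c"
        by (simp add: add_divide_distrib[symmetric] algebra_simps)
      then have "x1\<^sup>2 / \<sigma>\<^sup>2 + m\<^sup>2 * x1\<^sup>2 / c = x1\<^sup>2 / c" using h1 by simp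
      then show ?thesis by (simp add: add_divide_distrib diff_divide_distrib minus_divide_left[symmetric] algebra_simps)
    qed
    then show ?thesis by (simp only: exp_add[symmetric])
  qed
  have "fac \<sigma> 0 x1 x1 * fac \<sigma> m x1 X =
     (2 * x1 / (\<sigma>\<^sup>2 * (1 - 0\<^sup>2))) * (2 * X / c) * (exp (- (x1\<^sup>2 + 0\<^sup>2 * x1\<^sup>2) / (\<sigma>\<^sup>2 * (1 - 0\<^sup>2))) * exp (- (X\<^sup>2 + m\<^sup>2 * x1\<^sup>2) / c))
      * bessel_I0 (2 * 0 * x1 * x1 / (\<sigma>\<^sup>2 * (1 - 0\<^sup>2))) * bessel_I0 (2 * m * x1 * X / c)"
    unfolding fac_def c_def by (simp only: ac_simps)
  also have "\<dots> = (2 * X / c * exp (- X\<^sup>2 / c)) * (2 * x1 / \<sigma>\<^sup>2 * exp (- x1\<^sup>2 / c) * bessel_I0 (2 * m * X * x1 / c))"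
    unfolding e by (simp add: I0_zero ac_simps)
  finally show ?thesis unfolding c_def .
qed


lemma prod_ins2: "finite I \<Longrightarrow> a \<notin> insert b I \<Longrightarrow> b \<notin> I \<Longrightarrow> prod f (insert a (insert b I)) = f a * (f b * prod f I)"
  by simp

lemma Ji:
  assumes N: "2 \<le> N" and \<sigma>: "0 < \<sigma>" and mu: "\<And>k. k \<in> {2..N} \<Longrightarrow> 0 \<le> mu k \<and> mu k < 1"
    and X: "0 \<le> X" and i: "i \<in> {2..N}"
  shows "(LINT y:(PiE ({1..N} - {i}) (\<lambda>_. {0..X}))|(PiM ({1..N} - {i}) (\<lambda>_. lborel)). fas_env_pdf N \<sigma> mu (y(i := X)))
    = 2 * X / (\<sigma>\<^sup>2 * (1 - (mu i)\<^sup>2)) * exp (- X\<^sup>2 / (\<sigma>\<^sup>2 * (1 - (mu i)\<^sup>2))) *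
          (LINT x1:{0..X}|lborel.
             2 * x1 / \<sigma>\<^sup>2 * exp (- x1\<^sup>2 / (\<sigma>\<^sup>2 * (1 - (mu i)\<^sup>2)))
             * bessel_I0 (2 * mu i * X * x1 / (\<sigma>\<^sup>2 * (1 - (mu i)\<^sup>2)))
             * (\<Prod>k\<in>{2..N} - {i}.
                  1 - marcum_Q1 (sqrt (2 * (mu k)\<^sup>2 / (\<sigma>\<^sup>2 * (1 - (mu k)\<^sup>2))) * x1)
                                (sqrt (2 / (\<sigma>\<^sup>2 * (1 - (mu k)\<^sup>2))) * X)))"
proof -
  interpret product_sigma_finite "\<lambda>_::nat. lborel::real measure" by standard
  define I where "I = {2..N} - {i}"
  have I1: "{1..N} - {i} = insert 1 I" "1 \<notin> I" "finite I" unfolding I_def using N i by auto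
  have Ii: "{1..N} = insert 1 (insert i I)" "i \<notin> I" "i \<noteq> 1" unfolding I_def using N i by auto
  define m where "m = mu i"
  have m: "0 \<le> m" "m < 1" "m\<^sup>2 < 1" using mu[OF i] unfolding m_def by (auto simp: abs_square_less_1)
  have muk: "(mu k)\<^sup>2 < 1" "0 \<le> mu k" "mu k < 1" if "k \<in> I" for k
    using mu[of k] that by (auto simp: I_def abs_square_less_1)
  define K where "K = 2 * X / (\<sigma>\<^sup>2 * (1 - m\<^sup>2)) * exp (- X\<^sup>2 / (\<sigma>\<^sup>2 * (1 - m\<^sup>2)))"
  have K0: "0 \<le> K" unfolding K_def using X \<sigma> m by auto
  define Rp where "Rp k u = enn2real (\<integral>\<^sup>+v. ennreal (indicator {0..X} v * fac \<sigma> (mu k) u v) \<partial>lborel)" for k u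
  define Rk where "Rk k u = 1 - marcum_Q1 (sqrt (2 * (mu k)\<^sup>2 / (\<sigma>\<^sup>2 * (1 - (mu k)\<^sup>2))) * u)
                                (sqrt (2 / (\<sigma>\<^sup>2 * (1 - (mu k)\<^sup>2))) * X)" for k u
  have Rk_int: "(\<integral>\<^sup>+v. ennreal (indicator {0..X} v * fac \<sigma> (mu k) u v) \<partial>lborel) = ennreal (Rk k u)"
    if "k \<in> I" "0 \<le> u" for k u
    unfolding Rk_def by (rule fac_scale) (use \<sigma> muk[OF that(1)] X in auto)
  have Rk0: "0 \<le> Rk k u" if "k \<in> I" "0 \<le> u" for k u
  proof -
    have "(mu k)\<^sup>2 \<le> 1" using muk[OF that(1)] by simp
    then show ?thesis unfolding Rk_def using X by (simp, intro Q1_le1 mult_nonneg_nonneg) auto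
  qed
  have RpRk: "Rp k u = Rk k u" if "k \<in> I" "0 \<le> u" for k u
    unfolding Rp_def Rk_int[OF that] using Rk0[OF that] by simp
  define Hp where "Hp x1 = 2 * x1 / \<sigma>\<^sup>2 * exp (- x1\<^sup>2 / (\<sigma>\<^sup>2 * (1 - m\<^sup>2))) * bessel_I0 (2 * m * X * x1 / (\<sigma>\<^sup>2 * (1 - m\<^sup>2)))
       * (\<Prod>k\<in>I. Rp k x1)" for x1
  define Hs where "Hs x1 = 2 * x1 / \<sigma>\<^sup>2 * exp (- x1\<^sup>2 / (\<sigma>\<^sup>2 * (1 - m\<^sup>2))) * bessel_I0 (2 * m * X * x1 / (\<sigma>\<^sup>2 * (1 - m\<^sup>2)))
       * (\<Prod>k\<in>I. Rk k x1)" for x1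
  have Hp_meas: "Hp \<in> borel_measurable borel" unfolding Hp_def Rp_def by measurable
  have Hp0: "0 \<le> indicator {0..X} x1 * Hp x1" for x1
  proof (cases "x1 \<in> {0..X}")
    case True
    have p: "0 \<le> (\<Prod>k\<in>I. Rp k x1)" by (rule prod_nonneg) (simp add: Rp_def)
    have "0 \<le> Hp x1" unfolding Hp_def
      by (intro mult_nonneg_nonneg divide_nonneg_pos I0_nonneg p) (use True \<sigma> in auto)
    then show ?thesis using True by simp
  qed simp
  have HpHs: "indicator {0..X} x1 * Hp x1 = indicator {0..X} x1 * Hs x1" for x1
    unfolding Hp_def Hs_def by (auto simp: indicator_def RpRk intro!: prod.cong)
  define F where "F y = ennreal (indicator (PiE ({1..N} - {i}) (\<lambda>_. {0..X})) y * fas_env_pdf N \<sigma> mu (y(i := X)))" for y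
  have F_meas: "F \<in> borel_measurable (PiM (insert 1 I) (\<lambda>_. lborel))"
    unfolding F_def I1(1)[symmetric]
  proof -
    have sub: "{1..N} \<subseteq> insert i ({1..N} - {i})" by auto
    show "(\<lambda>y. ennreal (indicator (PiE ({1..N} - {i}) (\<lambda>_. {0..X})) y * fas_env_pdf N \<sigma> mu (y(i := X)))) \<in> borel_measurable (PiM ({1..N} - {i}) (\<lambda>_. lborel))"
      by (rule measurable_compose[OF _ measurable_ennreal], rule borel_measurable_times)
         (use box_meas[of "{1..N} - {i}" X] pdf_upd_meas[OF sub, of \<sigma> mu X] in auto)
  qed
  have step1: "(LINT y:(PiE ({1..N} - {i}) (\<lambda>_. {0..X}))|(PiM ({1..N} - {i}) (\<lambda>_. lborel)). fas_env_pdf N \<sigma> mu (y(i := X)))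
      = enn2real (\<integral>\<^sup>+y. F y \<partial>PiM (insert 1 I) (\<lambda>_. lborel))"
    unfolding F_def I1(1)[symmetric] by (rule J_nn) (use \<sigma> mu X in auto)
  have step2: "(\<integral>\<^sup>+y. F y \<partial>PiM (insert 1 I) (\<lambda>_. lborel))
      = (\<integral>\<^sup>+x1. (\<integral>\<^sup>+y. F (y(1 := x1)) \<partial>PiM I (\<lambda>_. lborel)) \<partial>lborel)"
    by (rule product_nn_integral_insert_rev) (use I1 F_meas in auto)
  have step3: "(\<integral>\<^sup>+y. F (y(1 := x1)) \<partial>PiM I (\<lambda>_. lborel)) = ennreal (K * (indicator {0..X} x1 * Hp x1))" for x1
  proof -
    define G where "G = indicator {0..X} x1 * (fac \<sigma> 0 x1 x1 * fac \<sigma> m x1 X)"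
    have G0: "0 \<le> G" unfolding G_def using \<sigma> m X by (auto simp: indicator_def intro!: mult_nonneg_nonneg fac_nonneg)
    have fk0: "0 \<le> indicator {0..X} v * fac \<sigma> (mu k) x1 v" if "k \<in> I" for k v
      using \<sigma> muk[OF that] by (auto simp: indicator_def intro!: fac_nonneg)
    have "(\<integral>\<^sup>+y. F (y(1 := x1)) \<partial>PiM I (\<lambda>_. lborel))
        = (\<integral>\<^sup>+y. ennreal G * (\<Prod>k\<in>I. ennreal (indicator {0..X} (y k) * fac \<sigma> (mu k) x1 (y k))) \<partial>PiM I (\<lambda>_. lborel))"
    proof (rule nn_integral_cong)
      fix y assume y: "y \<in> space (PiM I (\<lambda>_. lborel::real measure))"
      then have ye: "y(1 := x1) \<in> extensional ({1..N} - {i})" unfolding I1(1)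
        by (simp add: space_PiM PiE_def extensional_def)
      have "indicator (PiE ({1..N} - {i}) (\<lambda>_. {0..X})) (y(1 := x1))
          = (\<Prod>k\<in>insert 1 I. indicator {0..X} ((y(1 := x1)) k) :: real)"
        using indicator_PiE_prod[OF _ ye, of "\<lambda>_. {0..X}"] I1 by simp
      also have "\<dots> = indicator {0..X} x1 * (\<Prod>k\<in>I. indicator {0..X} (y k))"
      proof -
        have "(\<Prod>k\<in>I. indicator {0..X} ((y(1 := x1)) k)) = (\<Prod>k\<in>I. indicator {0..X} (y k) :: real)"
          by (rule prod.cong) (use I1(2) in auto)
        then show ?thesis using prod.insert[OF I1(3) I1(2), of "\<lambda>k. indicator {0..X} ((y(1 := x1)) k) :: real"] by simp
      qed
      finally have ind: "indicator (PiE ({1..N} - {i}) (\<lambda>_. {0..X})) (y(1 := x1)) = indicator {0..X} x1 * (\<Prod>k\<in>I. indicator {0..X} (y k) :: real)" .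
      have "fas_env_pdf N \<sigma> mu ((y(1 := x1))(i := X))
          = fac \<sigma> 0 x1 x1 * (fac \<sigma> m x1 X * (\<Prod>k\<in>I. fac \<sigma> (mu k) x1 (y k)))"
      proof -
        let ?z = "(y(1 := x1))(i := X)"
        have z1: "?z 1 = x1" using Ii(3) by simp
        have "fas_env_pdf N \<sigma> mu ?z = fac \<sigma> (fas_mu mu 1) (?z 1) (?z 1) * (fac \<sigma> (fas_mu mu i) (?z 1) (?z i) * (\<Prod>k\<in>I. fac \<sigma> (fas_mu mu k) (?z 1) (?z k)))"
          unfolding pdf_fac Ii(1) by (rule prod_ins2) (use Ii I1 in auto)
        also have "(\<Prod>k\<in>I. fac \<sigma> (fas_mu mu k) (?z 1) (?z k)) = (\<Prod>k\<in>I. fac \<sigma> (mu k) x1 (y k))"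
        proof (rule prod.cong)
          fix k assume "k \<in> I"
          then have "k \<noteq> 1" "k \<noteq> i" using Ii I1 by auto
          then show "fac \<sigma> (fas_mu mu k) (?z 1) (?z k) = fac \<sigma> (mu k) x1 (y k)"
            unfolding z1 by (simp add: fas_mu_def)
        qed simp
        also have "fac \<sigma> (fas_mu mu 1) (?z 1) (?z 1) = fac \<sigma> 0 x1 x1" unfolding z1 by (simp add: fas_mu_def)
        also have "fac \<sigma> (fas_mu mu i) (?z 1) (?z i) = fac \<sigma> m x1 X" unfolding z1 using Ii(3) by (simp add: fas_mu_def m_def)
        finally show ?thesis .
      qed
      with ind have "indicator (PiE ({1..N} - {i}) (\<lambda>_. {0..X})) (y(1 := x1)) * fas_env_pdf N \<sigma> mu ((y(1 := x1))(i := X))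
          = G * (\<Prod>k\<in>I. indicator {0..X} (y k) * fac \<sigma> (mu k) x1 (y k))"
        unfolding G_def by (simp add: prod.distrib ac_simps)
      then show "F (y(1 := x1)) = ennreal G * (\<Prod>k\<in>I. ennreal (indicator {0..X} (y k) * fac \<sigma> (mu k) x1 (y k)))"
        unfolding F_def using ennreal_cprod[OF G0, of I "\<lambda>k. indicator {0..X} (y k) * fac \<sigma> (mu k) x1 (y k)"] fk0 Ii(3)
        by simp
    qed
    also have "\<dots> = ennreal G * (\<integral>\<^sup>+y. (\<Prod>k\<in>I. ennreal (indicator {0..X} (y k) * fac \<sigma> (mu k) x1 (y k))) \<partial>PiM I (\<lambda>_. lborel))"
      by (rule nn_integral_cmult) (auto simp: I1 intro!: borel_measurable_prod_ennreal)
    also have "(\<integral>\<^sup>+y. (\<Prod>k\<in>I. ennreal (indicator {0..X} (y k) * fac \<sigma> (mu k) x1 (y k))) \<partial>PiM I (\<lambda>_. lborel))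
        = (\<Prod>k\<in>I. \<integral>\<^sup>+v. ennreal (indicator {0..X} v * fac \<sigma> (mu k) x1 v) \<partial>lborel)"
      by (rule product_nn_integral_prod[where f="\<lambda>k v. ennreal (indicator {0..X} v * fac \<sigma> (mu k) x1 v)"]) (auto simp: I1)
    also have "ennreal G * \<dots> = ennreal (G * (\<Prod>k\<in>I. Rp k x1))"
    proof (cases "x1 \<in> {0..X}")
      case True
      then have "(\<Prod>k\<in>I. \<integral>\<^sup>+v. ennreal (indicator {0..X} v * fac \<sigma> (mu k) x1 v) \<partial>lborel) = (\<Prod>k\<in>I. ennreal (Rp k x1))"
        by (auto intro!: prod.cong simp: Rk_int RpRk)
      moreover have "0 \<le> Rp k x1" for k unfolding Rp_def by simp
      ultimately show ?thesis using ennreal_cprod[OF G0, of I "\<lambda>k. Rp k x1"] by simp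
    next
      case False
      then have "G = 0" unfolding G_def by simp
      then show ?thesis by simp
    qed
    also have "G * (\<Prod>k\<in>I. Rp k x1) = K * (indicator {0..X} x1 * Hp x1)"
      unfolding G_def Hp_def K_def G_alg[OF \<sigma> m(3)] by (simp add: ac_simps)
    finally show ?thesis .
  qed
  have "(\<integral>\<^sup>+y. F y \<partial>PiM (insert 1 I) (\<lambda>_. lborel)) = (\<integral>\<^sup>+x1. ennreal K * ennreal (indicator {0..X} x1 * Hp x1) \<partial>lborel)"
    unfolding step2 step3 using K0 Hp0 by (simp add: ennreal_mult)
  also have "\<dots> = ennreal K * (\<integral>\<^sup>+x1. ennreal (indicator {0..X} x1 * Hp x1) \<partial>lborel)"
    by (rule nn_integral_cmult) (use Hp_meas in measurable)
  finally have "enn2real (\<integral>\<^sup>+y. F y \<partial>PiM (insert 1 I) (\<lambda>_. lborel)) = K * enn2real (\<integral>\<^sup>+x1. ennreal (indicator {0..X} x1 * Hp x1) \<partial>lborel)"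
    using K0 by (simp add: enn2real_mult)
  also have "enn2real (\<integral>\<^sup>+x1. ennreal (indicator {0..X} x1 * Hp x1) \<partial>lborel) = (LINT x1|lborel. indicator {0..X} x1 * Hp x1)"
    by (rule integral_eq_nn_integral[symmetric]) (use Hp_meas Hp0 in auto)
  also have "\<dots> = (LINT x1:{0..X}|lborel. Hs x1)"
    unfolding set_lebesgue_integral_def real_scaleR_def HpHs ..
  finally show ?thesis unfolding step1 K_def Hs_def Rk_def I_def m_def .
qed


theorem theorem1:
  fixes N :: nat and \<sigma> fD xth :: real and mu :: "nat \<Rightarrow> real"
  assumes "N \<ge> 2" and "\<sigma> > 0" and "fD > 0"
    and "\<And>k. k \<in> {2..N} \<Longrightarrow> 0 \<le> mu k \<and> mu k < 1"
    and "xth > 0"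
  shows "fas_lcr N \<sigma> fD mu xth =
    sqrt (2 * pi) * xth * fD / \<sigma> *
    ( exp (- xth\<^sup>2 / \<sigma>\<^sup>2) *
        (\<Prod>k\<in>{2..N}. 1 - marcum_Q1 (sqrt (2 * (mu k)\<^sup>2 / (\<sigma>\<^sup>2 * (1 - (mu k)\<^sup>2))) * xth)
                                      (sqrt (2 / (\<sigma>\<^sup>2 * (1 - (mu k)\<^sup>2))) * xth))
      + (\<Sum>i\<in>{2..N}. 1 / (1 - (mu i)\<^sup>2) * exp (- xth\<^sup>2 / (\<sigma>\<^sup>2 * (1 - (mu i)\<^sup>2))) *
          (LINT x1:{0..xth}|lborel.
             2 * x1 / \<sigma>\<^sup>2 * exp (- x1\<^sup>2 / (\<sigma>\<^sup>2 * (1 - (mu i)\<^sup>2)))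
             * bessel_I0 (2 * mu i * xth * x1 / (\<sigma>\<^sup>2 * (1 - (mu i)\<^sup>2)))
             * (\<Prod>k\<in>{2..N} - {i}.
                  1 - marcum_Q1 (sqrt (2 * (mu k)\<^sup>2 / (\<sigma>\<^sup>2 * (1 - (mu k)\<^sup>2))) * x1)
                                (sqrt (2 / (\<sigma>\<^sup>2 * (1 - (mu k)\<^sup>2))) * xth)))))"
proof -
  note N = assms(1) and \<sigma> = assms(2) and fD = assms(3) and mu = assms(4) and X = assms(5)
  define J where "J i = (LINT y:(PiE ({1..N} - {i}) (\<lambda>_. {0..xth}))|(PiM ({1..N} - {i}) (\<lambda>_. lborel)). fas_env_pdf N \<sigma> mu (y(i := xth)))" for i
  define P where "P = (\<Prod>k\<in>{2..N}. 1 - marcum_Q1 (sqrt (2 * (mu k)\<^sup>2 / (\<sigma>\<^sup>2 * (1 - (mu k)\<^sup>2))) * xth)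
                                      (sqrt (2 / (\<sigma>\<^sup>2 * (1 - (mu k)\<^sup>2))) * xth))"
  define L where "L i = (LINT x1:{0..xth}|lborel.
             2 * x1 / \<sigma>\<^sup>2 * exp (- x1\<^sup>2 / (\<sigma>\<^sup>2 * (1 - (mu i)\<^sup>2)))
             * bessel_I0 (2 * mu i * xth * x1 / (\<sigma>\<^sup>2 * (1 - (mu i)\<^sup>2)))
             * (\<Prod>k\<in>{2..N} - {i}.
                  1 - marcum_Q1 (sqrt (2 * (mu k)\<^sup>2 / (\<sigma>\<^sup>2 * (1 - (mu k)\<^sup>2))) * x1)
                                (sqrt (2 / (\<sigma>\<^sup>2 * (1 - (mu k)\<^sup>2))) * xth)))" for i
  define S where "S = (\<Sum>i\<in>{1..N}. J i)"
  define s where "s = pi * \<sigma> * fD"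
  have X0: "0 \<le> xth" using X by simp
  have s: "0 < s" unfolding s_def using \<sigma> fD by simp
  have J1: "J 1 = 2 * xth / \<sigma>\<^sup>2 * exp (- xth\<^sup>2 / \<sigma>\<^sup>2) * P"
  proof -
    have "{1..N} - {1} = {2..N}" by auto
    then show ?thesis unfolding J_def P_def using J1[OF N \<sigma> mu X0] by simp
  qed
  have Ji: "J i = 2 * xth / (\<sigma>\<^sup>2 * (1 - (mu i)\<^sup>2)) * exp (- xth\<^sup>2 / (\<sigma>\<^sup>2 * (1 - (mu i)\<^sup>2))) * L i" if "i \<in> {2..N}" for i
    unfolding J_def L_def using Ji[OF N \<sigma> mu X0 that] by simp
  have "fas_lcr N \<sigma> fD mu xth = (LINT xd:{0..}|lborel. S * (xd * normal_density 0 s xd))"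
    unfolding fas_lcr_def fas_joint_pdf_def S_def J_def s_def
    by (simp add: sum_distrib_left[symmetric] ac_simps)
  also have "\<dots> = S * (s / sqrt (2 * pi))"
    using half_normal_mean[OF s] by simp
  also have "S = J 1 + (\<Sum>i\<in>{2..N}. J i)"
  proof -
    have "{1..N} = insert 1 {2..N}" using N by auto
    then show ?thesis unfolding S_def by simp
  qed
  also have "(\<Sum>i\<in>{2..N}. J i) = (\<Sum>i\<in>{2..N}. (2 * xth / \<sigma>\<^sup>2) * (1 / (1 - (mu i)\<^sup>2) * exp (- xth\<^sup>2 / (\<sigma>\<^sup>2 * (1 - (mu i)\<^sup>2))) * L i))"
    by (rule sum.cong) (auto simp: Ji)
  also have "\<dots> = (2 * xth / \<sigma>\<^sup>2) * (\<Sum>i\<in>{2..N}. 1 / (1 - (mu i)\<^sup>2) * exp (- xth\<^sup>2 / (\<sigma>\<^sup>2 * (1 - (mu i)\<^sup>2))) * L i)"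
    by (rule sum_distrib_left[symmetric])
  finally have eq: "fas_lcr N \<sigma> fD mu xth = (s / sqrt (2 * pi) * (2 * xth / \<sigma>\<^sup>2)) *
     (exp (- xth\<^sup>2 / \<sigma>\<^sup>2) * P + (\<Sum>i\<in>{2..N}. 1 / (1 - (mu i)\<^sup>2) * exp (- xth\<^sup>2 / (\<sigma>\<^sup>2 * (1 - (mu i)\<^sup>2))) * L i))"
    unfolding J1 by (simp add: algebra_simps)
  have key: "s / sqrt (2 * pi) * (2 * xth / \<sigma>\<^sup>2) = sqrt (2 * pi) * xth * fD / \<sigma>"
  proof -
    have q: "sqrt (2 * pi) * sqrt (2 * pi) = 2 * pi" by simp
    have "s / sqrt (2 * pi) * (2 * xth / \<sigma>\<^sup>2) = (2 * pi) * xth * fD / (\<sigma> * sqrt (2 * pi))"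
      unfolding s_def using \<sigma> by (simp add: field_simps power2_eq_square)
    also have "\<dots> = (sqrt (2 * pi) * sqrt (2 * pi)) * xth * fD / (\<sigma> * sqrt (2 * pi))"
      by (simp only: q)
    also have "\<dots> = sqrt (2 * pi) * xth * fD / \<sigma>"
    proof -
      have t: "0 < sqrt (2 * pi)" by simp
      show ?thesis using t \<sigma> by (simp add: field_simps del: real_sqrt_mult_self)
    qed
    finally show ?thesis .
  qed
  show ?thesis using eq unfolding key P_def L_def .
qed

end
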